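(* Let $\mu:R\to S$ be a crossed module of racks. Then the induced group homomorphism ${\rm As}(\mu):{\rm As}(R)\to{\rm As}(S)$, together with the action of ${\rm As}(S)$ on ${\rm As}(R)$ by group automorphisms extending the given rack action of $S$ on $R$ (i.e. $i_R(r)\cdot i_S(s)=i_R(r\cdot s)$), is a crossed module of groups. In other words, the functor ${\rm As}$ sends crossed modules of racks to crossed modules of groups.
   Context: A (right) rack is a set with a binary operation $\lhd$ such that each $x\mapsto x\lhd y$ is bijective and $(x\lhd y)\lhd z=(x\lhd z)\lhd(y\lhd z)$. An action of a rack $R$ on a set $X$ is a family of bijections $x\mapsto x\cdot r$ ($r\in R$) with $(x\cdot r)\cdot r'=(x\cdot r')\cdot(r\lhd r')$; if $X$ is a rack, it is by automorphisms if also $(x\lhd x')\cdot r=(x\cdot r)\lhd(x'\cdot r)$. A crossed module of racks is a rack morphism $\mu:R\to S$ with an action of $S$ on $R$ by automorphisms such that $\mu(r\cdot s)=\mu(r)\lhd s$ and $r\cdot\mu(r')=r\lhd r'$ for all $r,r'\in R$, $s\in S$. For a rack $R$, the associated group ${\rm As}(R)$ is the quotient of the free group on the set $R$ by the normal subgroup generated by the elements $y^{-1}x^{-1}y(x\lhd y)$, $x,y\in R$, and $i_R:R\to{\rm As}(R)$ is the canonical map; a rack morphism $\mu:R\to S$ induces a group homomorphism ${\rm As}(\mu)$ with ${\rm As}(\mu)\circ i_R=i_S\circ\mu$. For a group $G$, the conjugation rack has $g\lhd h=h^{-1}gh$. A crossed module of groups is a group homomorphism $\mu:M\to N$ together with a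 right action of $N$ on $M$ by group automorphisms such that $\mu(m\cdot n)=n^{-1}\mu(m)n$ and $m\cdot\mu(m')=(m')^{-1}mm'$ for all $m,m'\in M$, $n\in N$. *)

theory Defs
  imports "HOL-Algebra.Group"
begin

definition is_rack :: "'a set \<Rightarrow> ('a \<Rightarrow> 'a \<Rightarrow> 'a) \<Rightarrow> bool" where
  "is_rack R op \<longleftrightarrow>
     (\<forall>x\<in>R. \<forall>y\<in>R. op x y \<in> R) \<and>
     (\<forall>y\<in>R. bij_betw (\<lambda>x. op x y) R R) \<and>
     (\<forall>x\<in>R. \<forall>y\<in>R. \<forall>z\<in>R. op (op x y) z = op (op x z) (op y z))"

definition rack_morphism ::
  "'a set \<Rightarrow> ('a \<Rightarrow> 'a \<Rightarrow> 'a) \<Rightarrow> 'b set \<Rightarrow> ('b \<Rightarrow> 'b \<Rightarrow> 'b) \<Rightarrow> ('a \<Rightarrow> 'b) \<Rightarrow> bool" where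
  "rack_morphism R opR S opS f \<longleftrightarrow>
     (\<forall>x\<in>R. f x \<in> S) \<and> (\<forall>x\<in>R. \<forall>y\<in>R. f (opR x y) = opS (f x) (f y))"

definition rack_action ::
  "'a set \<Rightarrow> ('a \<Rightarrow> 'a \<Rightarrow> 'a) \<Rightarrow> 'x set \<Rightarrow> ('x \<Rightarrow> 'a \<Rightarrow> 'x) \<Rightarrow> bool" where
  "rack_action R opR X act \<longleftrightarrow>
     (\<forall>r\<in>R. bij_betw (\<lambda>x. act x r) X X) \<and>
     (\<forall>x\<in>X. \<forall>r\<in>R. \<forall>r'\<in>R. act (act x r) r' = act (act x r') (opR r r'))"

definition rack_action_by_automorphisms ::
  "'a set \<Rightarrow> ('a \<Rightarrow> 'a \<Rightarrow> 'a) \<Rightarrow> 'x set \<Rightarrow> ('x \<Rightarrow> 'x \<Rightarrow> 'x) \<Rightarrow> ('x \<Rightarrow> 'a \<Rightarrow> 'x) \<Rightarrow> bool" where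
  "rack_action_by_automorphisms R opR X opX act \<longleftrightarrow>
     rack_action R opR X act \<and>
     (\<forall>x\<in>X. \<forall>x'\<in>X. \<forall>r\<in>R. act (opX x x') r = opX (act x r) (act x' r))"

definition rack_crossed_module ::
  "'r set \<Rightarrow> ('r \<Rightarrow> 'r \<Rightarrow> 'r) \<Rightarrow> 's set \<Rightarrow> ('s \<Rightarrow> 's \<Rightarrow> 's)
    \<Rightarrow> ('r \<Rightarrow> 's) \<Rightarrow> ('r \<Rightarrow> 's \<Rightarrow> 'r) \<Rightarrow> bool" where
  "rack_crossed_module R opR S opS \<mu> act \<longleftrightarrow>
     is_rack R opR \<and> is_rack S opS \<and>
     rack_morphism R opR S opS \<mu> \<and>
     rack_action_by_automorphisms S opS R opR act \<and>
     (\<forall>r\<in>R. \<forall>s\<in>S. \<mu> (act r s) = opS (\<mu> r) s) \<and>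
     (\<forall>r\<in>R. \<forall>r'\<in>R. act r (\<mu> r') = opR r r')"

text \<open>Words in the free group: lists of letters (x, True) = x and (x, False) = x^{-1}.
  As(R) is presented as the monoid on these letters modulo the congruence generated by
  x x^{-1} = 1, x^{-1} x = 1 and (x \<lhd> y) = y^{-1} x y, i.e. the quotient of the free
  group on R by the normal subgroup generated by y^{-1} x^{-1} y (x \<lhd> y).\<close>

inductive as_eq :: "'a set \<Rightarrow> ('a \<Rightarrow> 'a \<Rightarrow> 'a) \<Rightarrow> ('a \<times> bool) list \<Rightarrow> ('a \<times> bool) list \<Rightarrow> bool"
  for R op where
  as_refl: "as_eq R op w w"
| as_sym: "as_eq R op u w \<Longrightarrow> as_eq R op w u"
| as_trans: "as_eq R op u v \<Longrightarrow> as_eq R op v w \<Longrightarrow> as_eq R op u w"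
| as_cong: "as_eq R op u w \<Longrightarrow> as_eq R op (a @ u @ b) (a @ w @ b)"
| as_inv1: "x \<in> R \<Longrightarrow> as_eq R op [(x, True), (x, False)] []"
| as_inv2: "x \<in> R \<Longrightarrow> as_eq R op [(x, False), (x, True)] []"
| as_rel: "x \<in> R \<Longrightarrow> y \<in> R \<Longrightarrow>
     as_eq R op [(op x y, True)] [(y, False), (x, True), (y, True)]"

definition as_words :: "'a set \<Rightarrow> ('a \<times> bool) list set" where
  "as_words R = {w. set (map fst w) \<subseteq> R}"

definition as_class :: "'a set \<Rightarrow> ('a \<Rightarrow> 'a \<Rightarrow> 'a) \<Rightarrow> ('a \<times> bool) list \<Rightarrow> ('a \<times> bool) list set" where
  "as_class R op w = {u \<in> as_words R. as_eq R op w u}"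

definition As :: "'a set \<Rightarrow> ('a \<Rightarrow> 'a \<Rightarrow> 'a) \<Rightarrow> (('a \<times> bool) list set) monoid" where
  "As R op = \<lparr> carrier = as_class R op ` as_words R,
               mult = (\<lambda>A B. as_class R op ((SOME a. a \<in> A) @ (SOME b. b \<in> B))),
               one = as_class R op [] \<rparr>"

definition as_i :: "'a set \<Rightarrow> ('a \<Rightarrow> 'a \<Rightarrow> 'a) \<Rightarrow> 'a \<Rightarrow> ('a \<times> bool) list set" where
  "as_i R op x = as_class R op [(x, True)]"

definition As_map ::
  "'a set \<Rightarrow> ('a \<Rightarrow> 'a \<Rightarrow> 'a) \<Rightarrow> 'b set \<Rightarrow> ('b \<Rightarrow> 'b \<Rightarrow> 'b) \<Rightarrow> ('a \<Rightarrow> 'b)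
     \<Rightarrow> ('a \<times> bool) list set \<Rightarrow> ('b \<times> bool) list set" where
  "As_map R opR S opS f A =
     as_class S opS (map (\<lambda>(x, e). (f x, e)) (SOME a. a \<in> A))"

definition group_crossed_module ::
  "('m, 'c) monoid_scheme \<Rightarrow> ('n, 'd) monoid_scheme \<Rightarrow> ('m \<Rightarrow> 'n) \<Rightarrow> ('m \<Rightarrow> 'n \<Rightarrow> 'm) \<Rightarrow> bool" where
  "group_crossed_module M N \<mu> act \<longleftrightarrow>
     group M \<and> group N \<and> \<mu> \<in> hom M N \<and>
     (\<forall>n\<in>carrier N. (\<lambda>m. act m n) \<in> hom M M \<and> bij_betw (\<lambda>m. act m n) (carrier M) (carrier M)) \<and>
     (\<forall>m\<in>carrier M. act m \<one>\<^bsub>N\<^esub> = m) \<and>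
     (\<forall>m\<in>carrier M. \<forall>n\<in>carrier N. \<forall>n'\<in>carrier N.
        act (act m n) n' = act m (n \<otimes>\<^bsub>N\<^esub> n')) \<and>
     (\<forall>m\<in>carrier M. \<forall>n\<in>carrier N.
        \<mu> (act m n) = inv\<^bsub>N\<^esub> n \<otimes>\<^bsub>N\<^esub> \<mu> m \<otimes>\<^bsub>N\<^esub> n) \<and>
     (\<forall>m\<in>carrier M. \<forall>m'\<in>carrier M.
        act m (\<mu> m') = inv\<^bsub>M\<^esub> m' \<otimes>\<^bsub>M\<^esub> m \<otimes>\<^bsub>M\<^esub> m')"

end

theory Submission
  imports Defs
begin

lemma as_eq_words:
  assumes "is_rack R op" "as_eq R op u w"
  shows "u \<in> as_words R \<longleftrightarrow> w \<in> as_words R"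
  using assms(2)
proof induction
  case (as_rel x y) thus ?case using assms(1) by (auto simp: as_words_def is_rack_def)
qed (auto simp: as_words_def)

lemma as_class_eqI: "as_eq R op u w \<Longrightarrow> as_class R op u = as_class R op w"
  unfolding as_class_def by (meson as_sym as_trans)

lemma as_class_self: "w \<in> as_words R \<Longrightarrow> w \<in> as_class R op w"
  unfolding as_class_def by (simp add: as_refl)

lemma as_class_eqD: "w \<in> as_words R \<Longrightarrow> as_class R op u = as_class R op w \<Longrightarrow> as_eq R op u w"
  using as_class_self[of w R op] unfolding as_class_def by auto

lemma some_class:
  assumes "w \<in> as_words R"
  shows "(SOME a. a \<in> as_class R op w) \<in> as_words R \<and> as_eq R op w (SOME a. a \<in> as_class R op w)"
  using someI[of "\<lambda>a. a \<in> as_class R op w" w] as_class_self[OF assms]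
  by (simp add: as_class_def)

lemma as_eq_appL: "as_eq R op u w \<Longrightarrow> as_eq R op (u@v) (w@v)"
  using as_cong[of R op u w "[]" v] by simp
lemma as_eq_appR: "as_eq R op u w \<Longrightarrow> as_eq R op (v@u) (v@w)"
  using as_cong[of R op u w v "[]"] by simp
lemma as_eq_app2: "as_eq R op u w \<Longrightarrow> as_eq R op u' w' \<Longrightarrow> as_eq R op (u@u') (w@w')"
  by (meson as_eq_appL as_eq_appR as_trans)

lemma as_words_append[simp]: "(u @ w \<in> as_words R) = (u \<in> as_words R \<and> w \<in> as_words R)"
  by (auto simp: as_words_def)
lemma as_words_Cons[simp]: "(l # w \<in> as_words R) = (fst l \<in> R \<and> w \<in> as_words R)"
  by (auto simp: as_words_def)
lemma as_words_Nil[simp]: "[] \<in> as_words R"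
  by (auto simp: as_words_def)

lemma As_carrier: "carrier (As R op) = as_class R op ` as_words R"
  by (simp add: As_def)
lemma As_one: "\<one>\<^bsub>As R op\<^esub> = as_class R op []"
  by (simp add: As_def)

lemma As_mult:
  assumes "u \<in> as_words R" "w \<in> as_words R"
  shows "as_class R op u \<otimes>\<^bsub>As R op\<^esub> as_class R op w = as_class R op (u @ w)"
proof -
  have "as_eq R op (u @ w) ((SOME a. a \<in> as_class R op u) @ (SOME a. a \<in> as_class R op w))"
    using some_class[OF assms(1), of op] some_class[OF assms(2), of op] as_eq_app2 by blast
  thus ?thesis by (simp add: As_def as_class_eqI)
qed

definition winv :: "('a \<times> bool) list \<Rightarrow> ('a \<times> bool) list" where
  "winv w = rev (map (\<lambda>l. (fst l, \<not> snd l)) w)"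

lemma winv_words[simp]: "(winv w \<in> as_words R) = (w \<in> as_words R)"
  by (auto simp: winv_def as_words_def image_image)

lemma winv_Cons: "winv (l # w) = winv w @ [(fst l, \<not> snd l)]"
  by (cases l) (simp add: winv_def)

lemma pair_cancel: "x \<in> R \<Longrightarrow> as_eq R op [(x, \<not> e), (x, e)] []"
  by (cases e) (auto intro: as_inv1 as_inv2)

lemma winv_cancel: "w \<in> as_words R \<Longrightarrow> as_eq R op (winv w @ w) []"
proof (induction w)
  case Nil thus ?case by (simp add: winv_def as_refl)
next
  case (Cons l w)
  obtain x e where l: "l = (x, e)" by (cases l)
  have "as_eq R op (winv w @ [(x, \<not> e), (x, e)] @ w) (winv w @ [] @ w)"
    using as_cong[OF pair_cancel[of x R op e]] Cons.prems l by simp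
  hence "as_eq R op (winv (l # w) @ l # w) (winv w @ w)"
    by (simp add: winv_Cons l)
  thus ?case using Cons by (meson as_trans as_words_Cons)
qed

lemma As_group:
  assumes "is_rack R op"
  shows "group (As R op)"
proof (rule groupI)
  fix x y assume "x \<in> carrier (As R op)" "y \<in> carrier (As R op)"
  thus "x \<otimes>\<^bsub>As R op\<^esub> y \<in> carrier (As R op)"
    by (auto simp: As_carrier As_mult)
next
  show "\<one>\<^bsub>As R op\<^esub> \<in> carrier (As R op)" by (auto simp: As_carrier As_one)
next
  fix x y z assume "x \<in> carrier (As R op)" "y \<in> carrier (As R op)" "z \<in> carrier (As R op)"
  thus "x \<otimes>\<^bsub>As R op\<^esub> y \<otimes>\<^bsub>As R op\<^esub> z = x \<otimes>\<^bsub>As R op\<^esub> (y \<otimes>\<^bsub>As R op\<^esub> z)"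
    by (auto simp: As_carrier As_mult)
next
  fix x assume "x \<in> carrier (As R op)"
  thus "\<one>\<^bsub>As R op\<^esub> \<otimes>\<^bsub>As R op\<^esub> x = x"
    by (auto simp: As_carrier As_mult As_one)
next
  fix x assume "x \<in> carrier (As R op)"
  then obtain w where w: "w \<in> as_words R" "x = as_class R op w" by (auto simp: As_carrier)
  show "\<exists>y\<in>carrier (As R op). y \<otimes>\<^bsub>As R op\<^esub> x = \<one>\<^bsub>As R op\<^esub>"
    using w winv_cancel[OF w(1), of op]
    by (intro bexI[of _ "as_class R op (winv w)"]) (auto simp: As_carrier As_mult As_one as_class_eqI)
qed

lemma As_inv:
  assumes "is_rack R op" "w \<in> as_words R"
  shows "inv\<^bsub>As R op\<^esub> (as_class R op w) = as_class R op (winv w)"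
proof -
  interpret G: group "As R op" by (rule As_group[OF assms(1)])
  show ?thesis
    using winv_cancel[OF assms(2), of op] assms(2)
    by (intro G.inv_equality) (auto simp: As_carrier As_mult As_one as_class_eqI)
qed


lemma as_i_carrier: "x \<in> R \<Longrightarrow> as_i R op x \<in> carrier (As R op)"
  by (auto simp: As_carrier as_i_def)

lemma cls_carrier: "w \<in> as_words R \<Longrightarrow> as_class R op w \<in> carrier (As R op)"
  by (auto simp: As_carrier)

lemma cls_Cons: "fst l \<in> R \<Longrightarrow> w \<in> as_words R \<Longrightarrow>
   as_class R op (l # w) = as_class R op [l] \<otimes>\<^bsub>As R op\<^esub> as_class R op w"
  using As_mult[of "[l]" R w op] by simp

lemma cls_letter:
  assumes "is_rack R op" "x \<in> R"
  shows "as_class R op [(x, e)] = (if e then as_i R op x else inv\<^bsub>As R op\<^esub> (as_i R op x))"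
proof (cases e)
  case True thus ?thesis by (simp add: as_i_def)
next
  case False
  have "winv [(x,True)] = [(x,False)]" by (simp add: winv_def)
  with As_inv[OF assms(1), of "[(x,True)]"] assms(2) False show ?thesis by (simp add: as_i_def)
qed

lemma cls_rel:
  assumes "is_rack R op" "x \<in> R" "y \<in> R"
  shows "as_i R op (op x y) = inv\<^bsub>As R op\<^esub> (as_i R op y) \<otimes>\<^bsub>As R op\<^esub> as_i R op x \<otimes>\<^bsub>As R op\<^esub> as_i R op y"
proof -
  have "as_i R op (op x y) = as_class R op [(y, False), (x, True), (y, True)]"
    unfolding as_i_def by (rule as_class_eqI) (rule as_rel[OF assms(2,3)])
  also have "\<dots> = as_class R op [(y, False)] \<otimes>\<^bsub>As R op\<^esub> as_class R op [(x, True)] \<otimes>\<^bsub>As R op\<^esub> as_class R op [(y, True)]"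
    using assms by (simp add: As_mult)
  also have "\<dots> = inv\<^bsub>As R op\<^esub> (as_i R op y) \<otimes>\<^bsub>As R op\<^esub> as_i R op x \<otimes>\<^bsub>As R op\<^esub> as_i R op y"
    using cls_letter[OF assms(1) assms(3), of False] by (simp add: as_i_def)
  finally show ?thesis .
qed

lemma (in group) conj_inv: "a \<in> carrier G \<Longrightarrow> n \<in> carrier G \<Longrightarrow>
   inv (inv n \<otimes> a \<otimes> n) = inv n \<otimes> inv a \<otimes> n"
  by (simp add: inv_mult_group m_assoc)

lemma (in group) cancel_rl: "n \<in> carrier G \<Longrightarrow> c \<in> carrier G \<Longrightarrow> n \<otimes> (inv n \<otimes> c) = c"
  by (simp add: m_assoc[symmetric])
lemma (in group) cancel_lr: "n \<in> carrier G \<Longrightarrow> c \<in> carrier G \<Longrightarrow> inv n \<otimes> (n \<otimes> c) = c"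
  by (simp add: m_assoc[symmetric])

lemma (in group) conj_mult: "a \<in> carrier G \<Longrightarrow> b \<in> carrier G \<Longrightarrow> n \<in> carrier G \<Longrightarrow>
   (inv n \<otimes> a \<otimes> n) \<otimes> (inv n \<otimes> b \<otimes> n) = inv n \<otimes> (a \<otimes> b) \<otimes> n"
  by (simp add: m_assoc cancel_rl)

lemma (in group) conj_comp: "a \<in> carrier G \<Longrightarrow> m \<in> carrier G \<Longrightarrow> n \<in> carrier G \<Longrightarrow>
   inv (m \<otimes> n) \<otimes> a \<otimes> (m \<otimes> n) = inv n \<otimes> (inv m \<otimes> a \<otimes> m) \<otimes> n"
  by (simp add: inv_mult_group m_assoc)

lemma (in group) conj_one: "n \<in> carrier G \<Longrightarrow> inv n \<otimes> \<one> \<otimes> n = \<one>"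
  by simp

lemma (in group) conj_solve: "a \<in> carrier G \<Longrightarrow> y \<in> carrier G \<Longrightarrow> g \<in> carrier G \<Longrightarrow>
   inv g \<otimes> y \<otimes> g = a \<Longrightarrow> y = inv (inv g) \<otimes> a \<otimes> inv g"
  by (auto simp: m_assoc cancel_rl)



lemma as_eq_map:
  assumes "rack_morphism R opR S opS f" "as_eq R opR u w"
  shows "as_eq S opS (map (\<lambda>(x,e). (f x, e)) u) (map (\<lambda>(x,e). (f x, e)) w)"
  using assms(2)
proof induction
  case (as_refl w) thus ?case by (rule as_eq.as_refl)
next
  case (as_sym u w) thus ?case by (blast intro: as_eq.as_sym)
next
  case (as_trans u v w) thus ?case by (blast intro: as_eq.as_trans)
next
  case (as_cong u w a b) thus ?case using as_eq.as_cong by fastforce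
next
  case (as_inv1 x) thus ?case using assms(1) by (auto simp: rack_morphism_def intro: as_eq.as_inv1)
next
  case (as_inv2 x) thus ?case using assms(1) by (auto simp: rack_morphism_def intro: as_eq.as_inv2)
next
  case (as_rel x y) thus ?case using assms(1) by (auto simp: rack_morphism_def intro: as_eq.as_rel)
qed

lemma map_words:
  assumes "rack_morphism R opR S opS f" "u \<in> as_words R"
  shows "map (\<lambda>(x,e). (f x, e)) u \<in> as_words S"
  using assms by (auto simp: rack_morphism_def as_words_def)

lemma As_map_class:
  assumes "rack_morphism R opR S opS f" "u \<in> as_words R"
  shows "As_map R opR S opS f (as_class R opR u) = as_class S opS (map (\<lambda>(x,e). (f x, e)) u)"
  unfolding As_map_def
  using some_class[OF assms(2), of opR] as_eq_map[OF assms(1)]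
  by (metis as_class_eqI as_sym)

lemma As_map_hom:
  assumes "is_rack R opR" "is_rack S opS" "rack_morphism R opR S opS f"
  shows "As_map R opR S opS f \<in> hom (As R opR) (As S opS)"
proof (rule homI)
  fix x assume "x \<in> carrier (As R opR)"
  thus "As_map R opR S opS f x \<in> carrier (As S opS)"
    using As_map_class[OF assms(3)] map_words[OF assms(3)] by (auto simp: As_carrier)
next
  fix x y assume "x \<in> carrier (As R opR)" "y \<in> carrier (As R opR)"
  thus "As_map R opR S opS f (x \<otimes>\<^bsub>As R opR\<^esub> y) = As_map R opR S opS f x \<otimes>\<^bsub>As S opS\<^esub> As_map R opR S opS f y"
    using As_map_class[OF assms(3)] map_words[OF assms(3)] by (auto simp: As_carrier As_mult)
qed



locale xmod =
  fixes R :: "'r set" and opR :: "'r \<Rightarrow> 'r \<Rightarrow> 'r"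
    and S :: "'s set" and opS :: "'s \<Rightarrow> 's \<Rightarrow> 's"
    and \<mu> :: "'r \<Rightarrow> 's" and act :: "'r \<Rightarrow> 's \<Rightarrow> 'r"
  assumes cm: "rack_crossed_module R opR S opS \<mu> act"
begin

lemma rackR: "is_rack R opR" and rackS: "is_rack S opS" and morph: "rack_morphism R opR S opS \<mu>"
  using cm by (auto simp: rack_crossed_module_def)

lemma act_bij: "s \<in> S \<Longrightarrow> bij_betw (\<lambda>x. act x s) R R"
  using cm by (auto simp: rack_crossed_module_def rack_action_by_automorphisms_def rack_action_def)
lemma act_in: "r \<in> R \<Longrightarrow> s \<in> S \<Longrightarrow> act r s \<in> R"
  using act_bij bij_betw_apply by fastforce
lemma act_act: "r \<in> R \<Longrightarrow> s \<in> S \<Longrightarrow> s' \<in> S \<Longrightarrow> act (act r s) s' = act (act r s') (opS s s')"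
  using cm by (auto simp: rack_crossed_module_def rack_action_by_automorphisms_def rack_action_def)
lemma act_op: "x \<in> R \<Longrightarrow> y \<in> R \<Longrightarrow> s \<in> S \<Longrightarrow> act (opR x y) s = opR (act x s) (act y s)"
  using cm by (auto simp: rack_crossed_module_def rack_action_by_automorphisms_def)
lemma mu_act: "r \<in> R \<Longrightarrow> s \<in> S \<Longrightarrow> \<mu> (act r s) = opS (\<mu> r) s"
  using cm by (auto simp: rack_crossed_module_def)
lemma act_mu: "r \<in> R \<Longrightarrow> r' \<in> R \<Longrightarrow> act r (\<mu> r') = opR r r'"
  using cm by (auto simp: rack_crossed_module_def)
lemma mu_in: "r \<in> R \<Longrightarrow> \<mu> r \<in> S"
  using morph by (auto simp: rack_morphism_def)
lemma opR_in: "x \<in> R \<Longrightarrow> y \<in> R \<Longrightarrow> opR x y \<in> R"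
  using rackR by (auto simp: is_rack_def)

definition ainv :: "'s \<Rightarrow> 'r \<Rightarrow> 'r" where "ainv s r = inv_into R (\<lambda>x. act x s) r"

lemma ainv_in: "s \<in> S \<Longrightarrow> r \<in> R \<Longrightarrow> ainv s r \<in> R"
  unfolding ainv_def using act_bij bij_betw_inv_into bij_betw_apply by metis
lemma act_ainv: "s \<in> S \<Longrightarrow> r \<in> R \<Longrightarrow> act (ainv s r) s = r"
  unfolding ainv_def using act_bij[of s] bij_betw_imp_surj_on f_inv_into_f by metis
lemma ainv_act: "s \<in> S \<Longrightarrow> r \<in> R \<Longrightarrow> ainv s (act r s) = r"
  unfolding ainv_def using act_bij[of s] bij_betw_imp_inj_on inv_into_f_f by metis
lemma ainv_op: "s \<in> S \<Longrightarrow> x \<in> R \<Longrightarrow> y \<in> R \<Longrightarrow> ainv s (opR x y) = opR (ainv s x) (ainv s y)"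
proof -
  assume a: "s \<in> S" "x \<in> R" "y \<in> R"
  have "act (opR (ainv s x) (ainv s y)) s = opR x y"
    using a by (simp add: act_op ainv_in act_ainv)
  hence "ainv s (opR x y) = ainv s (act (opR (ainv s x) (ainv s y)) s)" by simp
  also have "\<dots> = opR (ainv s x) (ainv s y)" using a by (simp add: ainv_act ainv_in opR_in)
  finally show ?thesis .
qed

definition lact :: "'r \<Rightarrow> 's \<times> bool \<Rightarrow> 'r" where
  "lact r l = (if snd l then act r (fst l) else ainv (fst l) r)"
definition ract :: "'r \<Rightarrow> ('s \<times> bool) list \<Rightarrow> 'r" where
  "ract r v = foldl lact r v"

lemma ract_Nil[simp]: "ract r [] = r" by (simp add: ract_def)
lemma ract_Cons[simp]: "ract r (l # v) = ract (lact r l) v" by (simp add: ract_def)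
lemma ract_append: "ract r (u @ v) = ract (ract r u) v" by (simp add: ract_def)

lemma lact_in: "r \<in> R \<Longrightarrow> fst l \<in> S \<Longrightarrow> lact r l \<in> R"
  by (simp add: lact_def act_in ainv_in)
lemma ract_in: "r \<in> R \<Longrightarrow> v \<in> as_words S \<Longrightarrow> ract r v \<in> R"
  by (induction v arbitrary: r) (auto simp: lact_in)
lemma lact_op: "x \<in> R \<Longrightarrow> y \<in> R \<Longrightarrow> fst l \<in> S \<Longrightarrow> lact (opR x y) l = opR (lact x l) (lact y l)"
  by (simp add: lact_def act_op ainv_op)
lemma ract_op: "x \<in> R \<Longrightarrow> y \<in> R \<Longrightarrow> v \<in> as_words S \<Longrightarrow> ract (opR x y) v = opR (ract x v) (ract y v)"
  by (induction v arbitrary: x y) (auto simp: lact_op lact_in)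

definition wact :: "('r \<times> bool) list \<Rightarrow> ('s \<times> bool) list \<Rightarrow> ('r \<times> bool) list" where
  "wact w v = map (\<lambda>(x, e). (ract x v, e)) w"

lemma wact_words: "w \<in> as_words R \<Longrightarrow> v \<in> as_words S \<Longrightarrow> wact w v \<in> as_words R"
  by (auto simp: wact_def as_words_def ract_in)
lemma wact_Nil2: "wact w [] = w"
  by (induction w) (auto simp: wact_def)
lemma wact_comp: "wact (wact w v) v' = wact w (v @ v')"
  by (induction w) (auto simp: wact_def ract_append)
lemma wact_append: "wact (u @ w) v = wact u v @ wact w v"
  by (simp add: wact_def)

lemma wact_eq:
  assumes "v \<in> as_words S" "as_eq R opR u w"
  shows "as_eq R opR (wact u v) (wact w v)"
  using assms(2)
proof induction
  case (as_refl w) thus ?case by (rule as_eq.as_refl)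
next
  case (as_sym u w) thus ?case by (blast intro: as_eq.as_sym)
next
  case (as_trans u v w) thus ?case by (blast intro: as_eq.as_trans)
next
  case (as_cong u w a b) thus ?case using as_eq.as_cong by (fastforce simp: wact_append)
next
  case (as_inv1 x) thus ?case using assms(1) by (auto simp: wact_def ract_in intro: as_eq.as_inv1)
next
  case (as_inv2 x) thus ?case using assms(1) by (auto simp: wact_def ract_in intro: as_eq.as_inv2)
next
  case (as_rel x y) thus ?case using assms(1)
    by (auto simp: wact_def ract_in ract_op intro: as_eq.as_rel)
qed

lemma ract_resp:
  assumes "as_eq S opS v v'"
  shows "v \<in> as_words S \<Longrightarrow> v' \<in> as_words S \<Longrightarrow> \<forall>r\<in>R. ract r v = ract r v'"
  using assms
proof (induction arbitrary: rule: as_eq.induct)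
  case (as_refl w) thus ?case by simp
next
  case (as_sym u w) thus ?case by simp
next
  case (as_trans u v w)
  have "v \<in> as_words S" using as_eq_words[OF rackS as_trans.hyps(1)] as_trans.prems by simp
  thus ?case using as_trans by simp
next
  case (as_cong u w a b)
  thus ?case by (auto simp: ract_append ract_in)
next
  case (as_inv1 x) thus ?case by (auto simp: lact_def ainv_act)
next
  case (as_inv2 x) thus ?case by (auto simp: lact_def act_ainv)
next
  case (as_rel x y)
  show ?case
  proof
    fix r assume r: "r \<in> R"
    have "act (act (ainv y r) x) y = act (act (ainv y r) y) (opS x y)"
      using as_rel r by (simp add: act_act ainv_in)
    thus "ract r [(opS x y, True)] = ract r [(y, False), (x, True), (y, True)]"
      using as_rel r by (simp add: lact_def act_ainv)
  qed
qed

definition phi :: "('r \<times> bool) list set \<Rightarrow> ('s \<times> bool) list set \<Rightarrow> ('r \<times> bool) list set" where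
  "phi A B = as_class R opR (wact (SOME a. a \<in> A) (SOME b. b \<in> B))"

lemma phi_class:
  assumes "u \<in> as_words R" "v \<in> as_words S"
  shows "phi (as_class R opR u) (as_class S opS v) = as_class R opR (wact u v)"
proof -
  define a where "a = (SOME a. a \<in> as_class R opR u)"
  define b where "b = (SOME b. b \<in> as_class S opS v)"
  have a: "a \<in> as_words R" "as_eq R opR u a" using some_class[OF assms(1)] a_def by auto
  have b: "b \<in> as_words S" "as_eq S opS v b" using some_class[OF assms(2)] b_def by auto
  have "\<forall>r\<in>R. ract r b = ract r v" using ract_resp[OF as_sym[OF b(2)] b(1) assms(2)] .
  hence "wact a b = wact a v" using a(1) unfolding wact_def
    by (auto simp: as_words_def intro!: map_cong)
  moreover have "as_eq R opR (wact u v) (wact a v)" using wact_eq[OF assms(2) a(2)] .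
  ultimately show ?thesis unfolding phi_def a_def[symmetric] b_def[symmetric]
    by (metis as_class_eqI as_sym)
qed

end



context xmod
begin

abbreviation "GR \<equiv> As R opR"
abbreviation "GS \<equiv> As S opS"
abbreviation "cR \<equiv> as_class R opR"
abbreviation "cS \<equiv> as_class S opS"
abbreviation "gR \<equiv> as_i R opR"
abbreviation "gS \<equiv> as_i S opS"
abbreviation "M \<equiv> As_map R opR S opS \<mu>"

lemma GR: "group GR" by (rule As_group[OF rackR])
lemma GS: "group GS" by (rule As_group[OF rackS])

lemma carrierE_R: "m \<in> carrier GR \<Longrightarrow> (\<And>u. u \<in> as_words R \<Longrightarrow> m = cR u \<Longrightarrow> P) \<Longrightarrow> P"
  by (auto simp: As_carrier)
lemma carrierE_S: "n \<in> carrier GS \<Longrightarrow> (\<And>v. v \<in> as_words S \<Longrightarrow> n = cS v \<Longrightarrow> P) \<Longrightarrow> P"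
  by (auto simp: As_carrier)

lemma phi_carrier: "m \<in> carrier GR \<Longrightarrow> n \<in> carrier GS \<Longrightarrow> phi m n \<in> carrier GR"
  by (erule carrierE_R, erule carrierE_S) (simp add: phi_class wact_words cls_carrier)

lemma phi_one: "m \<in> carrier GR \<Longrightarrow> phi m \<one>\<^bsub>GS\<^esub> = m"
  by (erule carrierE_R) (simp add: As_one phi_class wact_Nil2)

lemma phi_comp: "m \<in> carrier GR \<Longrightarrow> n \<in> carrier GS \<Longrightarrow> n' \<in> carrier GS \<Longrightarrow>
    phi (phi m n) n' = phi m (n \<otimes>\<^bsub>GS\<^esub> n')"
  by (erule carrierE_R, erule carrierE_S, erule carrierE_S)
     (simp add: phi_class wact_words As_mult wact_comp)

lemma phi_hom: "m \<in> carrier GR \<Longrightarrow> m' \<in> carrier GR \<Longrightarrow> n \<in> carrier GS \<Longrightarrow>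
    phi (m \<otimes>\<^bsub>GR\<^esub> m') n = phi m n \<otimes>\<^bsub>GR\<^esub> phi m' n"
  by (erule carrierE_R, erule carrierE_R, erule carrierE_S)
     (simp add: phi_class wact_words As_mult wact_append)

lemma phi_cancel1: "m \<in> carrier GR \<Longrightarrow> n \<in> carrier GS \<Longrightarrow> phi (phi m (inv\<^bsub>GS\<^esub> n)) n = m"
  using group.l_inv[OF GS] group.inv_closed[OF GS] by (simp add: phi_comp phi_one)
lemma phi_cancel2: "m \<in> carrier GR \<Longrightarrow> n \<in> carrier GS \<Longrightarrow> phi (phi m n) (inv\<^bsub>GS\<^esub> n) = m"
  using group.r_inv[OF GS] group.inv_closed[OF GS] by (simp add: phi_comp phi_one)

lemma phi_bij: "n \<in> carrier GS \<Longrightarrow> bij_betw (\<lambda>m. phi m n) (carrier GR) (carrier GR)"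
  by (rule bij_betw_byWitness[where f'="\<lambda>m. phi m (inv\<^bsub>GS\<^esub> n)"])
     (auto simp: phi_cancel1 phi_cancel2 phi_carrier group.inv_closed[OF GS])

lemma phi_hom': "n \<in> carrier GS \<Longrightarrow> (\<lambda>m. phi m n) \<in> hom GR GR"
  by (rule homI) (auto simp: phi_carrier phi_hom)

lemma gS_carrier: "x \<in> S \<Longrightarrow> gS x \<in> carrier GS" by (rule as_i_carrier)
lemma gR_carrier: "x \<in> R \<Longrightarrow> gR x \<in> carrier GR" by (rule as_i_carrier)

lemma letterA:
  assumes r: "r \<in> R" and s: "s \<in> S"
  shows "gS (\<mu> (lact r (s, e))) = inv\<^bsub>GS\<^esub> (cS [(s, e)]) \<otimes>\<^bsub>GS\<^esub> gS (\<mu> r) \<otimes>\<^bsub>GS\<^esub> cS [(s, e)]"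
proof (cases e)
  case True
  thus ?thesis using r s cls_rel[OF rackS mu_in[OF r] s] by (simp add: lact_def mu_act as_i_def)
next
  case False
  interpret G: group GS by (rule GS)
  define z where "z = ainv s r"
  have z: "z \<in> R" "act z s = r" using r s by (auto simp: z_def ainv_in act_ainv)
  have "inv\<^bsub>GS\<^esub> (gS s) \<otimes>\<^bsub>GS\<^esub> gS (\<mu> z) \<otimes>\<^bsub>GS\<^esub> gS s = gS (\<mu> r)"
    using z s by (metis cls_rel[OF rackS] mu_act mu_in)
  hence "gS (\<mu> z) = inv\<^bsub>GS\<^esub> (inv\<^bsub>GS\<^esub> (gS s)) \<otimes>\<^bsub>GS\<^esub> gS (\<mu> r) \<otimes>\<^bsub>GS\<^esub> inv\<^bsub>GS\<^esub> (gS s)"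
    by (rule G.conj_solve[rotated 3]) (auto simp: gS_carrier mu_in z r s)
  thus ?thesis using False s by (simp add: lact_def z_def cls_letter[OF rackS])
qed

lemma claimA:
  "r \<in> R \<Longrightarrow> v \<in> as_words S \<Longrightarrow>
    gS (\<mu> (ract r v)) = inv\<^bsub>GS\<^esub> (cS v) \<otimes>\<^bsub>GS\<^esub> gS (\<mu> r) \<otimes>\<^bsub>GS\<^esub> cS v"
proof (induction v arbitrary: r)
  case Nil
  interpret G: group GS by (rule GS)
  show ?case using Nil by (simp add: As_one[symmetric] gS_carrier mu_in)
next
  case (Cons l v)
  interpret G: group GS by (rule GS)
  obtain s e where l: "l = (s, e)" by (cases l)
  have s: "s \<in> S" using Cons.prems l by simp
  have v: "v \<in> as_words S" using Cons.prems by simp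
  have cl: "cS [(s, e)] \<in> carrier GS" using s by (simp add: cls_carrier)
  have cv: "cS v \<in> carrier GS" using v by (simp add: cls_carrier)
  have "gS (\<mu> (ract r (l # v))) = inv\<^bsub>GS\<^esub> (cS v) \<otimes>\<^bsub>GS\<^esub> gS (\<mu> (lact r l)) \<otimes>\<^bsub>GS\<^esub> cS v"
    using Cons.IH[OF lact_in[OF Cons.prems(1)] v] s l by simp
  also have "\<dots> = inv\<^bsub>GS\<^esub> (cS v) \<otimes>\<^bsub>GS\<^esub> (inv\<^bsub>GS\<^esub> (cS [(s, e)]) \<otimes>\<^bsub>GS\<^esub> gS (\<mu> r) \<otimes>\<^bsub>GS\<^esub> cS [(s, e)]) \<otimes>\<^bsub>GS\<^esub> cS v"
    using letterA[OF Cons.prems(1) s] l by simp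
  also have "\<dots> = inv\<^bsub>GS\<^esub> (cS [(s, e)] \<otimes>\<^bsub>GS\<^esub> cS v) \<otimes>\<^bsub>GS\<^esub> gS (\<mu> r) \<otimes>\<^bsub>GS\<^esub> (cS [(s, e)] \<otimes>\<^bsub>GS\<^esub> cS v)"
    using G.conj_comp[OF gS_carrier[OF mu_in[OF Cons.prems(1)]] cl cv] by simp
  also have "cS [(s, e)] \<otimes>\<^bsub>GS\<^esub> cS v = cS (l # v)"
    using cls_Cons[of l S v opS] s v l by simp
  finally show ?case .
qed

lemma claimA':
  assumes "r \<in> R" "v \<in> as_words S"
  shows "cS [(\<mu> (ract r v), e)] = inv\<^bsub>GS\<^esub> (cS v) \<otimes>\<^bsub>GS\<^esub> cS [(\<mu> r, e)] \<otimes>\<^bsub>GS\<^esub> cS v"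
proof -
  interpret G: group GS by (rule GS)
  show ?thesis
    using claimA[OF assms] assms
    by (simp add: cls_letter[OF rackS] mu_in ract_in G.conj_inv gS_carrier cls_carrier)
qed

lemma claimB:
  "u \<in> as_words R \<Longrightarrow> v \<in> as_words S \<Longrightarrow>
   cS (map (\<lambda>(x, e). (\<mu> x, e)) (wact u v)) =
   inv\<^bsub>GS\<^esub> (cS v) \<otimes>\<^bsub>GS\<^esub> cS (map (\<lambda>(x, e). (\<mu> x, e)) u) \<otimes>\<^bsub>GS\<^esub> cS v"
proof (induction u)
  case Nil
  interpret G: group GS by (rule GS)
  show ?case using Nil by (simp add: wact_def As_one[symmetric] cls_carrier)
next
  case (Cons l u)
  interpret G: group GS by (rule GS)
  obtain x e where l: "l = (x, e)" by (cases l)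
  have x: "x \<in> R" and u: "u \<in> as_words R" using Cons.prems l by auto
  have mw: "map (\<lambda>(x, e). (\<mu> x, e)) (wact u v) \<in> as_words S"
    using map_words[OF morph wact_words[OF u Cons.prems(2)]] .
  have mu: "map (\<lambda>(x, e). (\<mu> x, e)) u \<in> as_words S" using map_words[OF morph u] .
  have cv: "cS v \<in> carrier GS" using Cons.prems by (simp add: cls_carrier)
  have "cS (map (\<lambda>(x, e). (\<mu> x, e)) (wact (l # u) v)) =
        cS [(\<mu> (ract x v), e)] \<otimes>\<^bsub>GS\<^esub> cS (map (\<lambda>(x, e). (\<mu> x, e)) (wact u v))"
    using cls_Cons[of "(\<mu> (ract x v), e)" S "map (\<lambda>(x, e). (\<mu> x, e)) (wact u v)" opS] mw
      ract_in[OF x Cons.prems(2)] mu_in l by (simp add: wact_def)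
  also have "\<dots> = (inv\<^bsub>GS\<^esub> (cS v) \<otimes>\<^bsub>GS\<^esub> cS [(\<mu> x, e)] \<otimes>\<^bsub>GS\<^esub> cS v) \<otimes>\<^bsub>GS\<^esub>
      (inv\<^bsub>GS\<^esub> (cS v) \<otimes>\<^bsub>GS\<^esub> cS (map (\<lambda>(x, e). (\<mu> x, e)) u) \<otimes>\<^bsub>GS\<^esub> cS v)"
    using claimA'[OF x Cons.prems(2)] Cons.IH[OF u Cons.prems(2)] by simp
  also have "\<dots> = inv\<^bsub>GS\<^esub> (cS v) \<otimes>\<^bsub>GS\<^esub> (cS [(\<mu> x, e)] \<otimes>\<^bsub>GS\<^esub> cS (map (\<lambda>(x, e). (\<mu> x, e)) u)) \<otimes>\<^bsub>GS\<^esub> cS v"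
    by (rule G.conj_mult) (auto simp: cls_carrier mu mu_in x cv)
  also have "cS [(\<mu> x, e)] \<otimes>\<^bsub>GS\<^esub> cS (map (\<lambda>(x, e). (\<mu> x, e)) u) = cS (map (\<lambda>(x, e). (\<mu> x, e)) (l # u))"
    using cls_Cons[of "(\<mu> x, e)" S "map (\<lambda>(x, e). (\<mu> x, e)) u" opS] mu mu_in[OF x] l by simp
  finally show ?case .
qed

end



context xmod
begin

lemma claimC:
  assumes r: "r \<in> R"
  shows "u \<in> as_words R \<Longrightarrow> cR (wact u [(\<mu> r, True)]) = inv\<^bsub>GR\<^esub> (gR r) \<otimes>\<^bsub>GR\<^esub> cR u \<otimes>\<^bsub>GR\<^esub> gR r"
proof (induction u)
  case Nil
  interpret G: group GR by (rule GR)
  show ?case using r by (simp add: wact_def As_one[symmetric] gR_carrier)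
next
  case (Cons l u)
  interpret G: group GR by (rule GR)
  obtain x e where l: "l = (x, e)" by (cases l)
  have x: "x \<in> R" and u: "u \<in> as_words R" using Cons.prems l by auto
  have g: "gR r \<in> carrier GR" using r by (rule gR_carrier)
  have wu: "wact u [(\<mu> r, True)] \<in> as_words R" using wact_words[OF u] mu_in[OF r] by simp
  have rx: "ract x [(\<mu> r, True)] = opR x r" using x r by (simp add: lact_def act_mu)
  have letter: "cR [(opR x r, e)] = inv\<^bsub>GR\<^esub> (gR r) \<otimes>\<^bsub>GR\<^esub> cR [(x, e)] \<otimes>\<^bsub>GR\<^esub> gR r"
    using cls_rel[OF rackR x r] x r opR_in[OF x r]
    by (simp add: cls_letter[OF rackR] G.conj_inv gR_carrier)
  have "cR (wact (l # u) [(\<mu> r, True)]) = cR [(opR x r, e)] \<otimes>\<^bsub>GR\<^esub> cR (wact u [(\<mu> r, True)])"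
    using cls_Cons[of "(opR x r, e)" R "wact u [(\<mu> r, True)]" opR] wu opR_in[OF x r] l rx
    by (simp add: wact_def)
  also have "\<dots> = (inv\<^bsub>GR\<^esub> (gR r) \<otimes>\<^bsub>GR\<^esub> cR [(x, e)] \<otimes>\<^bsub>GR\<^esub> gR r) \<otimes>\<^bsub>GR\<^esub>
                  (inv\<^bsub>GR\<^esub> (gR r) \<otimes>\<^bsub>GR\<^esub> cR u \<otimes>\<^bsub>GR\<^esub> gR r)"
    using letter Cons.IH[OF u] by simp
  also have "\<dots> = inv\<^bsub>GR\<^esub> (gR r) \<otimes>\<^bsub>GR\<^esub> (cR [(x, e)] \<otimes>\<^bsub>GR\<^esub> cR u) \<otimes>\<^bsub>GR\<^esub> gR r"
    by (rule G.conj_mult) (auto simp: cls_carrier x u g)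
  also have "cR [(x, e)] \<otimes>\<^bsub>GR\<^esub> cR u = cR (l # u)"
    using cls_Cons[of "(x, e)" R u opR] x u l by simp
  finally show ?case .
qed

lemma phi_gen:
  assumes "m \<in> carrier GR" "r \<in> R"
  shows "phi m (gS (\<mu> r)) = inv\<^bsub>GR\<^esub> (gR r) \<otimes>\<^bsub>GR\<^esub> m \<otimes>\<^bsub>GR\<^esub> gR r"
  using assms(1)
  by (rule carrierE_R) (simp add: as_i_def phi_class mu_in assms(2) claimC[OF assms(2)])

lemma phi_gen_inv:
  assumes m: "m \<in> carrier GR" and r: "r \<in> R"
  shows "phi m (inv\<^bsub>GS\<^esub> (gS (\<mu> r))) = inv\<^bsub>GR\<^esub> (inv\<^bsub>GR\<^esub> (gR r)) \<otimes>\<^bsub>GR\<^esub> m \<otimes>\<^bsub>GR\<^esub> inv\<^bsub>GR\<^esub> (gR r)"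
proof -
  interpret G: group GR by (rule GR)
  have n: "gS (\<mu> r) \<in> carrier GS" using r by (simp add: gS_carrier mu_in)
  have y: "phi m (inv\<^bsub>GS\<^esub> (gS (\<mu> r))) \<in> carrier GR"
    using m n by (simp add: phi_carrier group.inv_closed[OF GS])
  have "inv\<^bsub>GR\<^esub> (gR r) \<otimes>\<^bsub>GR\<^esub> phi m (inv\<^bsub>GS\<^esub> (gS (\<mu> r))) \<otimes>\<^bsub>GR\<^esub> gR r = m"
    using phi_gen[OF y r] phi_cancel1[OF m n] by simp
  thus ?thesis by (rule G.conj_solve[rotated 3]) (auto simp: m y gR_carrier r)
qed

lemma phi_letter:
  assumes "m \<in> carrier GR" "r \<in> R"
  shows "phi m (cS [(\<mu> r, e)]) = inv\<^bsub>GR\<^esub> (cR [(r, e)]) \<otimes>\<^bsub>GR\<^esub> m \<otimes>\<^bsub>GR\<^esub> cR [(r, e)]"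
  using assms phi_gen phi_gen_inv
  by (simp add: cls_letter[OF rackS] cls_letter[OF rackR] mu_in)

lemma claimD:
  "u \<in> as_words R \<Longrightarrow> m \<in> carrier GR \<Longrightarrow>
    phi m (cS (map (\<lambda>(x, e). (\<mu> x, e)) u)) = inv\<^bsub>GR\<^esub> (cR u) \<otimes>\<^bsub>GR\<^esub> m \<otimes>\<^bsub>GR\<^esub> cR u"
proof (induction u arbitrary: m)
  case Nil
  interpret G: group GR by (rule GR)
  show ?case using Nil phi_one[OF Nil(2)] by (simp add: As_one[symmetric])
next
  case (Cons l u)
  interpret G: group GR by (rule GR)
  obtain x e where l: "l = (x, e)" by (cases l)
  have x: "x \<in> R" and u: "u \<in> as_words R" using Cons.prems l by auto
  have mu: "map (\<lambda>(x, e). (\<mu> x, e)) u \<in> as_words S" using map_words[OF morph u] .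
  have a: "cS [(\<mu> x, e)] \<in> carrier GS" using mu_in[OF x] by (simp add: cls_carrier)
  have b: "cS (map (\<lambda>(x, e). (\<mu> x, e)) u) \<in> carrier GS" using mu by (simp add: cls_carrier)
  have pa: "phi m (cS [(\<mu> x, e)]) \<in> carrier GR" using phi_carrier[OF Cons.prems(2) a] .
  have "cS (map (\<lambda>(x, e). (\<mu> x, e)) (l # u)) = cS [(\<mu> x, e)] \<otimes>\<^bsub>GS\<^esub> cS (map (\<lambda>(x, e). (\<mu> x, e)) u)"
    using cls_Cons[of "(\<mu> x, e)" S "map (\<lambda>(x, e). (\<mu> x, e)) u" opS] mu mu_in[OF x] l by simp
  hence "phi m (cS (map (\<lambda>(x, e). (\<mu> x, e)) (l # u))) = phi (phi m (cS [(\<mu> x, e)])) (cS (map (\<lambda>(x, e). (\<mu> x, e)) u))"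
    using phi_comp[OF Cons.prems(2) a b] by simp
  also have "\<dots> = inv\<^bsub>GR\<^esub> (cR u) \<otimes>\<^bsub>GR\<^esub> (inv\<^bsub>GR\<^esub> (cR [(x, e)]) \<otimes>\<^bsub>GR\<^esub> m \<otimes>\<^bsub>GR\<^esub> cR [(x, e)]) \<otimes>\<^bsub>GR\<^esub> cR u"
    using Cons.IH[OF u pa] phi_letter[OF Cons.prems(2) x] by simp
  also have "\<dots> = inv\<^bsub>GR\<^esub> (cR [(x, e)] \<otimes>\<^bsub>GR\<^esub> cR u) \<otimes>\<^bsub>GR\<^esub> m \<otimes>\<^bsub>GR\<^esub> (cR [(x, e)] \<otimes>\<^bsub>GR\<^esub> cR u)"
    using G.conj_comp[OF Cons.prems(2), of "cR [(x, e)]" "cR u"] x u by (simp add: cls_carrier)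
  also have "cR [(x, e)] \<otimes>\<^bsub>GR\<^esub> cR u = cR (l # u)"
    using cls_Cons[of "(x, e)" R u opR] x u l by simp
  finally show ?case .
qed

lemma main:
  "(\<forall>r\<in>R. \<forall>s\<in>S. phi (gR r) (gS s) = gR (act r s)) \<and>
   group_crossed_module GR GS M phi"
proof (intro conjI ballI)
  fix r s assume "r \<in> R" "s \<in> S"
  thus "phi (gR r) (gS s) = gR (act r s)"
    by (simp add: as_i_def phi_class wact_def lact_def)
next
  show "group_crossed_module GR GS M phi"
    unfolding group_crossed_module_def
  proof (intro conjI ballI)
    show "group GR" by (rule GR)
    show "group GS" by (rule GS)
    show "M \<in> hom GR GS" by (rule As_map_hom[OF rackR rackS morph])
  next
    fix n assume "n \<in> carrier GS"
    thus "(\<lambda>m. phi m n) \<in> hom GR GR" "bij_betw (\<lambda>m. phi m n) (carrier GR) (carrier GR)"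
      by (auto simp: phi_hom' phi_bij)
  next
    fix m assume "m \<in> carrier GR" thus "phi m \<one>\<^bsub>GS\<^esub> = m" by (rule phi_one)
  next
    fix m n n' assume "m \<in> carrier GR" "n \<in> carrier GS" "n' \<in> carrier GS"
    thus "phi (phi m n) n' = phi m (n \<otimes>\<^bsub>GS\<^esub> n')" by (rule phi_comp)
  next
    fix m n assume m: "m \<in> carrier GR" and n: "n \<in> carrier GS"
    show "M (phi m n) = inv\<^bsub>GS\<^esub> n \<otimes>\<^bsub>GS\<^esub> M m \<otimes>\<^bsub>GS\<^esub> n"
      using m n
      by (elim carrierE_R carrierE_S)
         (simp add: phi_class As_map_class[OF morph] wact_words claimB)
  next
    fix m m' assume m: "m \<in> carrier GR" and m': "m' \<in> carrier GR"
    show "phi m (M m') = inv\<^bsub>GR\<^esub> m' \<otimes>\<^bsub>GR\<^esub> m \<otimes>\<^bsub>GR\<^esub> m'"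
      using m' by (rule carrierE_R) (simp add: As_map_class[OF morph] claimD m)
  qed
qed

end

theorem mainTheorem2:
  fixes R :: "'r set" and opR :: "'r \<Rightarrow> 'r \<Rightarrow> 'r"
    and S :: "'s set" and opS :: "'s \<Rightarrow> 's \<Rightarrow> 's"
    and \<mu> :: "'r \<Rightarrow> 's" and act :: "'r \<Rightarrow> 's \<Rightarrow> 'r"
  assumes "rack_crossed_module R opR S opS \<mu> act"
  shows "\<exists>\<phi>. (\<forall>r\<in>R. \<forall>s\<in>S. \<phi> (as_i R opR r) (as_i S opS s) = as_i R opR (act r s)) \<and>
             group_crossed_module (As R opR) (As S opS) (As_map R opR S opS \<mu>) \<phi>"
proof -
  interpret xmod R opR S opS \<mu> act by (rule xmod.intro[OF assms])
  show ?thesis using main by blast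
qed


end
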